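(* Let $U,V\in\mathbb{R}_{\max}^{m\times n}$, $b,d\in\mathbb{R}_{\max}^m$, $p\in\mathbb{R}_{\max}^n$, $q\in(\mathbb{R}\cup\{+\infty\})^n$, and let $A$ and $B(\lambda)$ be the $(m+n+1)\times(n+1)$ matrices $$A=\begin{pmatrix} U & b\\ -\infty & p\\ q^- & -\infty\end{pmatrix},\qquad B(\lambda)=\begin{pmatrix} V & d\\ \lambda\otimes I & -\infty\\ -\infty & \lambda\end{pmatrix},\qquad \lambda\in\mathbb{R}.$$ Let $\mathcal{S}$ be the set of positional strategies of player Max and $\mathcal{T}$ the set of positional strategies of player Min. Then for every $\lambda\in\mathbb{R}$, $$\min_{\tau\in\mathcal{T}}\Phi_\tau(\lambda)=\Phi(\lambda)=\max_{\sigma\in\mathcal{S}}\Phi^{\sigma}(\lambda).$$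
   Context: Max-plus notation: $\mathbb{R}_{\max}=\mathbb{R}\cup\{-\infty\}$ with $a\oplus b=\max(a,b)$, $a\otimes b=a+b$, extended to matrices by $(A\oplus B)_{ij}=a_{ij}\oplus b_{ij}$ and $(A\otimes B)_{ij}=\max_k(a_{ik}+b_{kj})$. $I$ is the identity matrix (zeros on the diagonal, $-\infty$ off it). The conjugate $a^-$ of $a\in\mathbb{R}\cup\{\pm\infty\}$ is $-a$ if $a\in\mathbb{R}$, $+\infty$ if $a=-\infty$, $-\infty$ if $a=+\infty$; for a column vector $q$, $q^-$ is the row vector $(q_i^-)$. In $A$, the block "$-\infty$" in the second block row is the $n\times n$ all-$(-\infty)$ matrix, the last row is $(q^-,\,-\infty)$; in $B(\lambda)$, $\lambda\otimes I$ is the $n\times n$ matrix with $\lambda$ on the diagonal and $-\infty$ elsewhere, and the last row is $(-\infty,\dots,-\infty,\lambda)$. For matrices $A=(a_{ij}),B=(b_{ij})$ over $\mathbb{R}_{\max}$ of size $M\times N$, $A^{\sharp}B$ denotes the min-max map $f:\mathbb{R}^N\to\mathbb{R}^N$, $f_j(x)=\min_{k:\,a_{kj}\neq-\infty}\big(-a_{kj}+\max_{l:\,b_{kl}\neq -\infty}(b_{kl}+x_l)\big)$, and its cycle-time vector is $\chi(A^\sharp B)=\lim_{k\to\infty} f^k(0)/k$ (which exists). Standing assumption (needed for these objects to be defined): every column of $A$ and every row of $B(\lambda)$ contains a finite entry. A positional strategy of Max is a map $\sigma:\{1,\dots,m+n+1\}\to\{1,\dots,n+1\}$ with $B(\lambda)_{i\sigma(i)}\neq-\infty$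 for all $i$; a positional strategy of Min is a map $\tau:\{1,\dots,n+1\}\to\{1,\dots,m+n+1\}$ with $a_{\tau(j)j}\neq-\infty$ for all $j$. Define $A_\tau$ by $(A_\tau)_{ij}=a_{ij}$ if $i=\tau(j)$ and $-\infty$ otherwise, and $B^\sigma(\lambda)$ by $(B^\sigma(\lambda))_{ij}=B(\lambda)_{ij}$ if $j=\sigma(i)$ and $-\infty$ otherwise. Then $\Phi(\lambda)=\min_i\chi_i(A^\sharp B(\lambda))$, $\Phi_\tau(\lambda)=\min_i\chi_i(A_\tau^\sharp B(\lambda))$, $\Phi^\sigma(\lambda)=\min_i\chi_i(A^\sharp B^\sigma(\lambda))$. *)

theory Defs
  imports Complex_Main "HOL-Library.Extended_Real" "HOL-Library.FuncSet"
begin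

text \<open>Matrices over R_max are functions nat => nat => ereal, indexed from 0,
  with explicit dimensions; -\<infinity> is the max-plus zero. All entries used are
  assumed different from +\<infinity> (except the conjugate q^- handled by uminus on ereal).\<close>

definition minmax_map ::
  "nat \<Rightarrow> nat \<Rightarrow> (nat \<Rightarrow> nat \<Rightarrow> ereal) \<Rightarrow> (nat \<Rightarrow> nat \<Rightarrow> ereal) \<Rightarrow> (nat \<Rightarrow> real) \<Rightarrow> nat \<Rightarrow> real"
  where
  "minmax_map M N A B x j =
     Min {- real_of_ereal (A k j) +
            Max {real_of_ereal (B k l) + x l | l. l < N \<and> B k l \<noteq> -\<infinity>}
          | k. k < M \<and> A k j \<noteq> -\<infinity>}"

definition cycle_time ::
  "nat \<Rightarrow> nat \<Rightarrow> (nat \<Rightarrow> nat \<Rightarrow> ereal) \<Rightarrow> (nat \<Rightarrow> nat \<Rightarrow> ereal) \<Rightarrow> nat \<Rightarrow> real"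
  where
  "cycle_time M N A B j = lim (\<lambda>k. ((minmax_map M N A B ^^ k) (\<lambda>_. 0)) j / real k)"

definition Phi_val ::
  "nat \<Rightarrow> nat \<Rightarrow> (nat \<Rightarrow> nat \<Rightarrow> ereal) \<Rightarrow> (nat \<Rightarrow> nat \<Rightarrow> ereal) \<Rightarrow> real"
  where
  "Phi_val M N A B = Min {cycle_time M N A B i | i. i < N}"

definition matA ::
  "nat \<Rightarrow> nat \<Rightarrow> (nat \<Rightarrow> nat \<Rightarrow> ereal) \<Rightarrow> (nat \<Rightarrow> ereal) \<Rightarrow> (nat \<Rightarrow> ereal) \<Rightarrow> (nat \<Rightarrow> ereal)
   \<Rightarrow> nat \<Rightarrow> nat \<Rightarrow> ereal"
  where
  "matA m n U b p q i j =
     (if i < m then (if j < n then U i j else b i)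
      else if i < m + n then (if j < n then -\<infinity> else p (i - m))
      else (if j < n then - q j else -\<infinity>))"

definition matB ::
  "nat \<Rightarrow> nat \<Rightarrow> (nat \<Rightarrow> nat \<Rightarrow> ereal) \<Rightarrow> (nat \<Rightarrow> ereal) \<Rightarrow> real \<Rightarrow> nat \<Rightarrow> nat \<Rightarrow> ereal"
  where
  "matB m n V d lam i j =
     (if i < m then (if j < n then V i j else d i)
      else if i < m + n then (if j = i - m then ereal lam else -\<infinity>)
      else (if j = n then ereal lam else -\<infinity>))"

definition max_strategies ::
  "nat \<Rightarrow> nat \<Rightarrow> (nat \<Rightarrow> nat \<Rightarrow> ereal) \<Rightarrow> (nat \<Rightarrow> nat) set" where
  "max_strategies M N B = {\<sigma> \<in> {..<M} \<rightarrow>\<^sub>E {..<N}. \<forall>i<M. B i (\<sigma> i) \<noteq> -\<infinity>}"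

definition min_strategies ::
  "nat \<Rightarrow> nat \<Rightarrow> (nat \<Rightarrow> nat \<Rightarrow> ereal) \<Rightarrow> (nat \<Rightarrow> nat) set" where
  "min_strategies M N A = {\<tau> \<in> {..<N} \<rightarrow>\<^sub>E {..<M}. \<forall>j<N. A (\<tau> j) j \<noteq> -\<infinity>}"

definition restrict_min :: "(nat \<Rightarrow> nat \<Rightarrow> ereal) \<Rightarrow> (nat \<Rightarrow> nat) \<Rightarrow> nat \<Rightarrow> nat \<Rightarrow> ereal" where
  "restrict_min A \<tau> i j = (if i = \<tau> j then A i j else -\<infinity>)"

definition restrict_max :: "(nat \<Rightarrow> nat \<Rightarrow> ereal) \<Rightarrow> (nat \<Rightarrow> nat) \<Rightarrow> nat \<Rightarrow> nat \<Rightarrow> ereal" where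
  "restrict_max B \<sigma> i j = (if j = \<sigma> i then B i j else -\<infinity>)"

end

theory Submission
  imports Defs
begin

definition mx :: "nat \<Rightarrow> (nat \<Rightarrow> nat \<Rightarrow> ereal) \<Rightarrow> nat \<Rightarrow> (nat \<Rightarrow> real) \<Rightarrow> real" where
  "mx N B k u = Max {real_of_ereal (B k l) + u l | l. l < N \<and> B k l \<noteq> -\<infinity>}"

lemma mm_def2:
  "minmax_map M N A B u j = Min {- real_of_ereal (A k j) + mx N B k u | k. k < M \<and> A k j \<noteq> -\<infinity>}"
  unfolding minmax_map_def mx_def by simp

lemma mx_ge:
  assumes "l < N" "B k l \<noteq> -\<infinity>"
  shows "real_of_ereal (B k l) + u l \<le> mx N B k u"
  unfolding mx_def
  by (rule Max_ge) (use assms in \<open>auto simp: finite_image_set\<close>)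

lemma mx_att:
  assumes "\<exists>l<N. B k l \<noteq> -\<infinity>"
  shows "\<exists>l<N. B k l \<noteq> -\<infinity> \<and> mx N B k u = real_of_ereal (B k l) + u l"
proof -
  let ?S = "{real_of_ereal (B k l) + u l | l. l < N \<and> B k l \<noteq> -\<infinity>}"
  have "finite ?S" by (auto simp: finite_image_set)
  moreover have "?S \<noteq> {}" using assms by auto
  ultimately have "Max ?S \<in> ?S" by (rule Max_in)
  then show ?thesis unfolding mx_def by auto
qed

lemma mm_le:
  assumes "k < M" "A k j \<noteq> -\<infinity>"
  shows "minmax_map M N A B u j \<le> - real_of_ereal (A k j) + mx N B k u"
  unfolding mm_def2
  by (rule Min_le) (use assms in \<open>auto simp: finite_image_set\<close>)

lemma mm_att:
  assumes "\<exists>k<M. A k j \<noteq> -\<infinity>"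
  shows "\<exists>k<M. A k j \<noteq> -\<infinity> \<and> minmax_map M N A B u j = - real_of_ereal (A k j) + mx N B k u"
proof -
  let ?S = "{- real_of_ereal (A k j) + mx N B k u | k. k < M \<and> A k j \<noteq> -\<infinity>}"
  have "finite ?S" by (auto simp: finite_image_set)
  moreover have "?S \<noteq> {}" using assms by auto
  ultimately have "Min ?S \<in> ?S" by (rule Min_in)
  then show ?thesis unfolding mm_def2 by auto
qed

definition HA :: "nat \<Rightarrow> nat \<Rightarrow> (nat \<Rightarrow> nat \<Rightarrow> ereal) \<Rightarrow> bool" where
  "HA M N A \<longleftrightarrow> (\<forall>j<N. \<exists>k<M. A k j \<noteq> -\<infinity>)"
definition HB :: "nat \<Rightarrow> nat \<Rightarrow> (nat \<Rightarrow> nat \<Rightarrow> ereal) \<Rightarrow> bool" where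
  "HB M N B \<longleftrightarrow> (\<forall>k<M. \<exists>l<N. B k l \<noteq> -\<infinity>)"

lemma mm_shift:
  assumes "HA M N A" "HB M N B" "\<forall>l<N. u l \<le> w l + c" "j < N"
  shows "minmax_map M N A B u j \<le> minmax_map M N A B w j + c"
proof -
  obtain k where k: "k < M" "A k j \<noteq> -\<infinity>"
    "minmax_map M N A B w j = - real_of_ereal (A k j) + mx N B k w"
    using mm_att[of M A j N B w] assms(1,4) unfolding HA_def by blast
  obtain l where l: "l < N" "B k l \<noteq> -\<infinity>" "mx N B k u = real_of_ereal (B k l) + u l"
    using mx_att[of N B k u] assms(2) k(1) unfolding HB_def by blast
  have "minmax_map M N A B u j \<le> - real_of_ereal (A k j) + mx N B k u"
    using k(1,2) by (rule mm_le)
  also have "\<dots> \<le> - real_of_ereal (A k j) + mx N B k w + c"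
    using l mx_ge[where B=B and k=k and l=l and N=N and u=w, OF l(1,2)] assms(3) by force
  finally show ?thesis using k(3) by simp
qed

lemma mm_mono:
  assumes "HA M N A" "HB M N B" "\<forall>l<N. u l \<le> w l" "j < N"
  shows "minmax_map M N A B u j \<le> minmax_map M N A B w j"
  using mm_shift[OF assms(1,2) _ assms(4), of u w 0] assms(3) by simp

lemma iter_shift:
  assumes "HA M N A" "HB M N B" "\<forall>l<N. u l \<le> w l + c"
  shows "\<forall>j<N. (minmax_map M N A B ^^ k) u j \<le> (minmax_map M N A B ^^ k) w j + c"
proof (induction k)
  case 0 then show ?case using assms(3) by simp
next
  case (Suc k) then show ?case using mm_shift[OF assms(1,2)] by simp
qed

lemma iter_cmp:
  fixes g h :: "(nat \<Rightarrow> real) \<Rightarrow> nat \<Rightarrow> real"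
  assumes "\<And>u j. j < N \<Longrightarrow> g u j \<le> h u j"
    and "\<And>u w j. \<forall>l<N. u l \<le> w l \<Longrightarrow> j < N \<Longrightarrow> h u j \<le> h w j"
  shows "\<forall>j<N. (g ^^ k) z j \<le> (h ^^ k) z j"
proof (induction k)
  case 0 then show ?case by simp
next
  case (Suc k)
  show ?case
  proof (intro allI impI)
    fix j assume j: "j < N"
    have "(g ^^ Suc k) z j = g ((g ^^ k) z) j" by simp
    also have "\<dots> \<le> h ((g ^^ k) z) j" using assms(1) j by blast
    also have "\<dots> \<le> h ((h ^^ k) z) j" using assms(2) Suc j by blast
    finally show "(g ^^ Suc k) z j \<le> (h ^^ Suc k) z j" by simp
  qed
qed

lemma HA_rmin:
  assumes "\<tau> \<in> min_strategies M N A"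
  shows "HA M N (restrict_min A \<tau>)"
  using assms unfolding HA_def min_strategies_def restrict_min_def by (auto simp: PiE_iff)

lemma HB_rmax:
  assumes "\<sigma> \<in> max_strategies M N B"
  shows "HB M N (restrict_max B \<sigma>)"
  using assms unfolding HB_def max_strategies_def restrict_max_def by (auto simp: PiE_iff)

lemma mm_rmin:
  assumes "\<tau> \<in> min_strategies M N A" "j < N"
  shows "minmax_map M N (restrict_min A \<tau>) B u j = - real_of_ereal (A (\<tau> j) j) + mx N B (\<tau> j) u"
proof -
  have "{- real_of_ereal (restrict_min A \<tau> k j) + mx N B k u | k. k < M \<and> restrict_min A \<tau> k j \<noteq> -\<infinity>}
      = {- real_of_ereal (A (\<tau> j) j) + mx N B (\<tau> j) u}"
    using assms unfolding min_strategies_def restrict_min_def by (auto simp: PiE_iff)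
  then show ?thesis unfolding mm_def2 by simp
qed

lemma mx_rmax:
  assumes "\<sigma> \<in> max_strategies M N B" "k < M"
  shows "mx N (restrict_max B \<sigma>) k u = real_of_ereal (B k (\<sigma> k)) + u (\<sigma> k)"
proof -
  have "{real_of_ereal (restrict_max B \<sigma> k l) + u l | l. l < N \<and> restrict_max B \<sigma> k l \<noteq> -\<infinity>}
      = {real_of_ereal (B k (\<sigma> k)) + u (\<sigma> k)}"
    using assms unfolding max_strategies_def restrict_max_def by (auto simp: PiE_iff)
  then show ?thesis unfolding mx_def by simp
qed

lemma cmp_rmin:
  assumes "\<tau> \<in> min_strategies M N A" "j < N"
  shows "minmax_map M N A B u j \<le> minmax_map M N (restrict_min A \<tau>) B u j"
proof -
  have "\<tau> j < M" "A (\<tau> j) j \<noteq> -\<infinity>"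
    using assms unfolding min_strategies_def by (auto simp: PiE_iff)
  then show ?thesis unfolding mm_rmin[OF assms] by (rule mm_le)
qed

lemma cmp_rmax:
  assumes "\<sigma> \<in> max_strategies M N B" "j < N" "HA M N A"
  shows "minmax_map M N A (restrict_max B \<sigma>) u j \<le> minmax_map M N A B u j"
proof -
  obtain k where k: "k < M" "A k j \<noteq> -\<infinity>"
    "minmax_map M N A B u j = - real_of_ereal (A k j) + mx N B k u"
    using mm_att[of M A j N B u] assms(2,3) unfolding HA_def by blast
  have s: "\<sigma> k < N" "B k (\<sigma> k) \<noteq> -\<infinity>"
    using assms(1) k(1) unfolding max_strategies_def by (auto simp: PiE_iff)
  have "minmax_map M N A (restrict_max B \<sigma>) u j \<le> - real_of_ereal (A k j) + mx N (restrict_max B \<sigma>) k u"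
    using k(1,2) by (rule mm_le)
  also have "\<dots> = - real_of_ereal (A k j) + real_of_ereal (B k (\<sigma> k)) + u (\<sigma> k)"
    using mx_rmax[OF assms(1) k(1)] by simp
  also have "\<dots> \<le> - real_of_ereal (A k j) + mx N B k u"
    using mx_ge[where B=B and k=k and l="\<sigma> k" and N=N and u=u, OF s] by simp
  finally show ?thesis using k(3) by simp
qed

lemma mm_contr:
  assumes "HA M N A" "HB M N B" "0 \<le> \<beta>" "\<forall>l<N. \<bar>u l - w l\<bar> \<le> c" "j < N"
  shows "\<bar>minmax_map M N A B (\<lambda>l. \<beta> * u l) j - minmax_map M N A B (\<lambda>l. \<beta> * w l) j\<bar> \<le> \<beta> * c"
proof -
  have 1: "\<forall>l<N. \<beta> * u l \<le> \<beta> * w l + \<beta> * c" and 2: "\<forall>l<N. \<beta> * w l \<le> \<beta> * u l + \<beta> * c"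
    using assms(3,4) by (auto simp: abs_le_iff mult_left_mono simp flip: distrib_left)
  show ?thesis using mm_shift[OF assms(1,2) 1 assms(5)] mm_shift[OF assms(1,2) 2 assms(5)] by linarith
qed

lemma fixpoint:
  assumes "HA M N A" "HB M N B" "0 \<le> \<beta>" "\<beta> < 1"
  shows "\<exists>v. \<forall>j<N. minmax_map M N A B (\<lambda>l. \<beta> * v l) j = v j"
proof -
  define g where "g u = minmax_map M N A B (\<lambda>l. \<beta> * u l)" for u
  define X where "X k = (g ^^ k) (\<lambda>_. 0)" for k
  have XS: "X (Suc k) = g (X k)" for k unfolding X_def by simp
  have contr: "\<forall>j<N. \<bar>g u j - g w j\<bar> \<le> \<beta> * c" if "\<forall>l<N. \<bar>u l - w l\<bar> \<le> c" for u w c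
    unfolding g_def using mm_contr[OF assms(1,2,3) that] by blast
  define C0 where "C0 = (\<Sum>j<N. \<bar>X 1 j - X 0 j\<bar>)"
  have d: "\<forall>j<N. \<bar>X (Suc k) j - X k j\<bar> \<le> \<beta> ^ k * C0" for k
  proof (induction k)
    case 0
    show ?case unfolding C0_def
      by (auto intro!: member_le_sum)
  next
    case (Suc k)
    show ?case using contr[OF Suc] unfolding XS by (simp add: mult.assoc)
  qed
  have conv: "(\<lambda>k. X k j) \<longlonglongrightarrow> X 0 j + (\<Sum>i. X (Suc i) j - X i j)" if j: "j < N" for j
  proof -
    have "summable (\<lambda>i. \<beta> ^ i * C0)"
      using assms(3,4) by (intro summable_mult2 summable_geometric) simp
    then have sm: "summable (\<lambda>i. X (Suc i) j - X i j)"
      by (rule summable_comparison_test[rotated]) (use d j in auto)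
    have "(\<lambda>k. \<Sum>i<k. X (Suc i) j - X i j) \<longlonglongrightarrow> (\<Sum>i. X (Suc i) j - X i j)"
      by (rule summable_LIMSEQ[OF sm])
    then have "(\<lambda>k. X 0 j + (\<Sum>i<k. X (Suc i) j - X i j)) \<longlonglongrightarrow> X 0 j + (\<Sum>i. X (Suc i) j - X i j)"
      by (intro tendsto_add tendsto_const)
    moreover have "X 0 j + (\<Sum>i<k. X (Suc i) j - X i j) = X k j" for k
      using sum_lessThan_telescope[of "\<lambda>i. X i j" k] by simp
    ultimately show ?thesis by simp
  qed
  define v where "v j = X 0 j + (\<Sum>i. X (Suc i) j - X i j)" for j
  have conv': "(\<lambda>k. X k j) \<longlonglongrightarrow> v j" if "j < N" for j
    using conv[OF that] unfolding v_def .
  have cz: "(\<lambda>k. \<beta> * (\<Sum>l<N. \<bar>X k l - v l\<bar>)) \<longlonglongrightarrow> 0"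
  proof -
    have "(\<lambda>k. \<Sum>l<N. \<bar>X k l - v l\<bar>) \<longlonglongrightarrow> 0"
    proof (rule tendsto_null_sum)
      fix l assume "l \<in> {..<N}"
      then have "(\<lambda>k. X k l - v l) \<longlonglongrightarrow> 0" using conv' by (simp add: LIM_zero)
      then show "(\<lambda>k. \<bar>X k l - v l\<bar>) \<longlonglongrightarrow> 0" by (rule tendsto_rabs_zero)
    qed
    then show ?thesis by (rule tendsto_mult_right_zero)
  qed
  have "g v j = v j" if j: "j < N" for j
  proof -
    have b: "\<bar>X (Suc k) j - g v j\<bar> \<le> \<beta> * (\<Sum>l<N. \<bar>X k l - v l\<bar>)" for k
    proof -
      have "\<forall>l<N. \<bar>X k l - v l\<bar> \<le> (\<Sum>l<N. \<bar>X k l - v l\<bar>)"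
        by (auto intro!: member_le_sum)
      from contr[OF this] j show ?thesis unfolding XS by blast
    qed
    have "(\<lambda>k. X (Suc k) j - g v j) \<longlonglongrightarrow> 0"
    proof -
      have "norm (X (Suc k) j - g v j) \<le> norm (\<beta> * (\<Sum>l<N. \<bar>X k l - v l\<bar>)) * 1" for k
        using b[of k] abs_ge_self[of "\<beta> * (\<Sum>l<N. \<bar>X k l - v l\<bar>)"] by simp
      then show ?thesis by (intro tendsto_0_le[OF cz, where K=1] always_eventually allI)
    qed
    moreover have "(\<lambda>k. X (Suc k) j - g v j) \<longlonglongrightarrow> v j - g v j"
      using conv'[OF j] by (intro tendsto_diff tendsto_const) (rule LIMSEQ_Suc)
    ultimately have "v j - g v j = 0" using LIMSEQ_unique by blast
    then show ?thesis by simp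
  qed
  then show ?thesis unfolding g_def by blast
qed

lemma window:
  fixes h :: "nat \<Rightarrow> real"
  assumes "\<forall>i\<ge>P. h (i + P) = h i" "i \<ge> P"
  shows "(\<Sum>t<P. h (i + t)) = (\<Sum>t<P. h (P + t))"
  using assms(2)
proof (induction i rule: dec_induct)
  case base then show ?case by simp
next
  case (step i)
  have "(\<Sum>t<P. h (Suc i + t)) = (\<Sum>t<P. h (i + Suc t))" by simp
  also have "\<dots> = (\<Sum>t<Suc P. h (i + t)) - h i"
    by (subst sum.lessThan_Suc_shift) simp
  also have "\<dots> = (\<Sum>t<P. h (i + t)) + h (i + P) - h i" by simp
  also have "h (i + P) = h i" using assms(1) step(1) by blast
  finally show ?case using step(3) by simp
qed

locale fg =
  fixes N :: nat and s :: "nat \<Rightarrow> nat" and w :: "nat \<Rightarrow> real"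
  assumes s_in: "\<forall>j<N. s j < N"
begin

definition P :: nat where "P = fact N"

lemma P_pos: "P > 0" unfolding P_def by simp

lemma st_in: "j < N \<Longrightarrow> (s ^^ t) j < N"
  by (induction t) (auto simp: s_in)

lemma st_Suc: "(s ^^ Suc t) j = s ((s ^^ t) j)" by simp

lemma st_add: "(s ^^ a) ((s ^^ b) j) = (s ^^ (a + b)) j" by (simp add: funpow_add)

lemma per:
  assumes j: "j < N"
  shows "\<forall>i\<ge>P. (s ^^ (i + P)) j = (s ^^ i) j"
proof -
  let ?f = "\<lambda>i. (s ^^ i) j"
  have "\<not> inj_on ?f {0..N}"
  proof
    assume inj: "inj_on ?f {0..N}"
    have "?f ` {0..N} \<subseteq> {..<N}" using st_in[OF j] by auto
    then have "card (?f ` {0..N}) \<le> N" using card_mono[of "{..<N}"] by fastforce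
    moreover have "card (?f ` {0..N}) = Suc N" using card_image[OF inj] by simp
    ultimately show False by simp
  qed
  then obtain a b where ab: "a \<le> N" "b \<le> N" "a \<noteq> b" "?f a = ?f b"
    unfolding inj_on_def by auto
  obtain a b where ab: "a < b" "b \<le> N" "?f a = ?f b"
  proof (cases "a < b")
    case True then show ?thesis using ab that by blast
  next
    case False then show ?thesis using ab that[of b a] by auto
  qed
  define q where "q = b - a"
  have q: "q \<ge> 1" "q \<le> N" using ab unfolding q_def by auto
  have step: "?f (i + q) = ?f i" if "i \<ge> a" for i
  proof -
    have "?f (i + q) = (s ^^ (i - a)) ((s ^^ b) j)" using that ab unfolding q_def
      by (simp add: st_add)
    also have "\<dots> = (s ^^ (i - a)) ((s ^^ a) j)" using ab by simp
    also have "\<dots> = ?f i" using that by (simp add: st_add)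
    finally show ?thesis .
  qed
  have mult: "?f (i + m * q) = ?f i" if "i \<ge> a" for i m
  proof (induction m)
    case 0 then show ?case by simp
  next
    case (Suc m)
    have "?f (i + Suc m * q) = ?f ((i + m * q) + q)" by (simp add: algebra_simps)
    also have "\<dots> = ?f (i + m * q)" using step that by simp
    finally show ?case using Suc by simp
  qed
  have "q dvd P" unfolding P_def using q by (simp add: dvd_fact)
  then obtain m where m: "P = q * m" by (auto elim: dvdE)
  have "a \<le> P" using ab fact_ge_self[of N] unfolding P_def by linarith
  show ?thesis
  proof (intro allI impI)
    fix i assume "P \<le> i"
    then have "i \<ge> a" using \<open>a \<le> P\<close> by linarith
    then show "?f (i + P) = ?f i" using mult[of i m] m by (simp add: mult.commute)
  qed
qed

lemma window_st:
  fixes h :: "nat \<Rightarrow> real"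
  assumes "j < N" "i \<ge> P"
  shows "(\<Sum>t<P. h ((s ^^ (i + t)) j)) = (\<Sum>t<P. h ((s ^^ (P + t)) j))"
proof -
  have "\<forall>i\<ge>P. h ((s ^^ (i + P)) j) = h ((s ^^ i) j)" using per[OF assms(1)] by simp
  from window[of P "\<lambda>t. h ((s ^^ t) j)", OF this assms(2)] show ?thesis by simp
qed

definition eta :: "nat \<Rightarrow> real" where
  "eta j = (\<Sum>t<P. w ((s ^^ (P + t)) j)) / P"

lemma eta_s: assumes "j < N" shows "eta (s j) = eta j"
proof -
  have "(\<Sum>t<P. w ((s ^^ (P + t)) (s j))) = (\<Sum>t<P. w ((s ^^ (Suc P + t)) j))"
    by (simp add: funpow_swap1 flip: funpow_Suc_right)
  also have "\<dots> = (\<Sum>t<P. w ((s ^^ (P + t)) j))"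
    by (rule window_st[OF assms]) simp
  finally show ?thesis unfolding eta_def by simp
qed

lemma eta_st: assumes "j < N" shows "eta ((s ^^ t) j) = eta j"
  using assms by (induction t) (auto simp: eta_s st_in)

definition D :: "nat \<Rightarrow> nat \<Rightarrow> real" where
  "D Q j = (\<Sum>t<Q. w ((s ^^ t) j) - eta j)"

lemma D_diff: assumes "j < N" shows "D Q j - D Q (s j) = w j - w ((s ^^ Q) j)"
proof -
  have "D Q j - D Q (s j) = (\<Sum>t<Q. w ((s ^^ t) j) - w ((s ^^ Suc t) j))"
    unfolding D_def eta_s[OF assms] by (simp add: sum_subtractf funpow_swap1 flip: funpow_Suc_right)
  also have "\<dots> = w j - w ((s ^^ Q) j)"
    using sum_lessThan_telescope'[of "\<lambda>t. w ((s ^^ t) j)" Q] by simp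
  finally show ?thesis .
qed

definition x0 :: "nat \<Rightarrow> real" where
  "x0 j = (\<Sum>r<P. D (P + r) j) / P"

lemma x0_diff: assumes "j < N" shows "x0 j - x0 (s j) = w j - eta j"
proof -
  have "x0 j - x0 (s j) = (\<Sum>r<P. D (P + r) j - D (P + r) (s j)) / P"
    unfolding x0_def by (simp add: sum_subtractf diff_divide_distrib)
  also have "\<dots> = (\<Sum>r<P. w j - w ((s ^^ (P + r)) j)) / P"
    using D_diff[OF assms] by simp
  also have "\<dots> = (P * w j - (\<Sum>r<P. w ((s ^^ (P + r)) j))) / P"
    by (simp add: sum_subtractf)
  also have "\<dots> = w j - eta j"
    unfolding eta_def using P_pos by (simp add: field_simps)
  finally show ?thesis .
qed

definition xi :: "nat \<Rightarrow> real" where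
  "xi j = (\<Sum>t<P. x0 ((s ^^ (P + t)) j)) / P"

lemma xi_s: assumes "j < N" shows "xi (s j) = xi j"
proof -
  have "(\<Sum>t<P. x0 ((s ^^ (P + t)) (s j))) = (\<Sum>t<P. x0 ((s ^^ (Suc P + t)) j))"
    by (simp add: funpow_swap1 flip: funpow_Suc_right)
  also have "\<dots> = (\<Sum>t<P. x0 ((s ^^ (P + t)) j))"
    by (rule window_st[OF assms]) simp
  finally show ?thesis unfolding xi_def by simp
qed

lemma xi_st: assumes "j < N" shows "xi ((s ^^ t) j) = xi j"
  using assms by (induction t) (auto simp: xi_s st_in)

definition xx :: "nat \<Rightarrow> real" where "xx j = x0 j - xi j"

lemma bias: assumes "j < N" shows "xx j + eta j = w j + xx (s j)"
  using x0_diff[OF assms] xi_s[OF assms] unfolding xx_def by simp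

lemma zero_sum: assumes "j < N" "i \<ge> P" shows "(\<Sum>t<P. xx ((s ^^ (i + t)) j)) = 0"
proof -
  have "(\<Sum>t<P. xx ((s ^^ (i + t)) j)) = (\<Sum>t<P. xx ((s ^^ (P + t)) j))"
    by (rule window_st[OF assms])
  also have "\<dots> = (\<Sum>t<P. x0 ((s ^^ (P + t)) j)) - (\<Sum>t<P. xi ((s ^^ (P + t)) j))"
    unfolding xx_def by (simp add: sum_subtractf)
  also have "(\<Sum>t<P. xi ((s ^^ (P + t)) j)) = P * xi j"
    using xi_st[OF assms(1)] by simp
  also have "(\<Sum>t<P. x0 ((s ^^ (P + t)) j)) = P * xi j"
    unfolding xi_def using P_pos by simp
  finally show ?thesis by simp
qed

end

context fg
begin

definition Mx :: real where "Mx = (\<Sum>i<N. \<bar>xx i\<bar>)"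

lemma Mx_ge: "i < N \<Longrightarrow> \<bar>xx i\<bar> \<le> Mx"
  unfolding Mx_def by (rule member_le_sum) auto

lemma Mx_nonneg: "0 \<le> Mx" unfolding Mx_def by (simp add: sum_nonneg)

lemma ybound:
  assumes b0: "0 \<le> \<beta>" and b1: "\<beta> < 1" and veq: "\<forall>j<N. v j = w j + \<beta> * v (s j)" and j: "j < N"
  shows "\<bar>v j - eta j / (1 - \<beta>) - xx j\<bar> \<le> 2 * P * Mx * (1 - \<beta>)"
proof -
  define y where "y i = v i - eta i / (1 - \<beta>) - xx i" for i
  have ne: "1 - \<beta> \<noteq> 0" using b1 by simp
  have rec: "y i = \<beta> * y (s i) - (1 - \<beta>) * xx (s i)" if i: "i < N" for i
  proof -
    have e1: "v i = w i + \<beta> * v (s i)" using veq i by blast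
    have e2: "xx i = w i + xx (s i) - eta i" using bias[OF i] by simp
    have e3: "eta (s i) = eta i" using eta_s[OF i] .
    show ?thesis unfolding y_def e1 e2 e3 using ne by (simp add: field_simps)
  qed
  have iter: "y i = \<beta> ^ k * y ((s ^^ k) i) - (1 - \<beta>) * (\<Sum>t<k. \<beta> ^ t * xx ((s ^^ Suc t) i))"
    if i: "i < N" for i k
  proof (induction k)
    case 0 then show ?case by simp
  next
    case (Suc k)
    have r: "y ((s ^^ k) i) = \<beta> * y ((s ^^ Suc k) i) - (1 - \<beta>) * xx ((s ^^ Suc k) i)"
      using rec[OF st_in[OF i, of k]] by simp
    show ?case using Suc unfolding r by (simp add: algebra_simps)
  qed
  define c where "c = (s ^^ P) j"
  have c: "c < N" unfolding c_def by (rule st_in[OF j])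
  have cc: "(s ^^ P) c = c"
    unfolding c_def st_add using per[OF j] by (metis order_refl)
  have sum0: "(\<Sum>t<P. xx ((s ^^ Suc t) c)) = 0"
  proof -
    have "(\<Sum>t<P. xx ((s ^^ Suc t) c)) = (\<Sum>t<P. xx ((s ^^ (Suc P + t)) j))"
      unfolding c_def st_add by (simp add: add.commute)
    also have "\<dots> = 0" by (rule zero_sum[OF j]) simp
    finally show ?thesis .
  qed
  define S where "S = (\<Sum>t<P. \<beta> ^ t * xx ((s ^^ Suc t) c))"
  have bP: "\<beta> ^ P \<le> \<beta>" using power_decreasing[of 1 P \<beta>] P_pos b0 b1 by simp
  have S_eq: "S = (\<Sum>t<P. (\<beta> ^ t - 1) * xx ((s ^^ Suc t) c))"
    unfolding S_def using sum0 by (simp add: algebra_simps sum_subtractf)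
  have "\<bar>S\<bar> \<le> (\<Sum>t<P. \<bar>(\<beta> ^ t - 1) * xx ((s ^^ Suc t) c)\<bar>)"
    unfolding S_eq by (rule sum_abs)
  also have "\<dots> \<le> (\<Sum>t<P. (1 - \<beta> ^ P) * Mx)"
  proof (rule sum_mono)
    fix t assume "t \<in> {..<P}"
    then have "\<beta> ^ P \<le> \<beta> ^ t" using b0 b1 by (intro power_decreasing) auto
    moreover have "\<beta> ^ t \<le> 1" using b0 b1 by (simp add: power_le_one)
    moreover have "\<bar>xx ((s ^^ Suc t) c)\<bar> \<le> Mx" by (rule Mx_ge[OF st_in[OF c]])
    ultimately have "\<bar>\<beta> ^ t - 1\<bar> \<le> 1 - \<beta> ^ P" "\<bar>xx ((s ^^ Suc t) c)\<bar> \<le> Mx" by auto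
    then have "\<bar>\<beta> ^ t - 1\<bar> * \<bar>xx ((s ^^ Suc t) c)\<bar> \<le> (1 - \<beta> ^ P) * Mx"
      by (intro mult_mono) (auto simp: Mx_nonneg)
    then show "\<bar>(\<beta> ^ t - 1) * xx ((s ^^ Suc t) c)\<bar> \<le> (1 - \<beta> ^ P) * Mx"
      by (simp add: abs_mult)
  qed
  finally have Sb: "\<bar>S\<bar> \<le> P * (1 - \<beta> ^ P) * Mx" by simp
  have yc: "y c = \<beta> ^ P * y c - (1 - \<beta>) * S"
    using iter[OF c, of P] cc unfolding S_def by simp
  have pos: "0 < 1 - \<beta> ^ P" using bP b1 by simp
  have "(1 - \<beta> ^ P) * \<bar>y c\<bar> = (1 - \<beta>) * \<bar>S\<bar>"
  proof -
    have "(1 - \<beta> ^ P) * y c = - ((1 - \<beta>) * S)" using yc by (simp add: algebra_simps)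
    then have "\<bar>(1 - \<beta> ^ P) * y c\<bar> = \<bar>(1 - \<beta>) * S\<bar>" by simp
    then show ?thesis using pos b1 by (simp add: abs_mult)
  qed
  also have "\<dots> \<le> (1 - \<beta>) * (P * (1 - \<beta> ^ P) * Mx)"
    using Sb b1 by (intro mult_left_mono) auto
  finally have "(1 - \<beta> ^ P) * \<bar>y c\<bar> \<le> (1 - \<beta> ^ P) * ((1 - \<beta>) * P * Mx)"
    by (simp add: algebra_simps)
  then have ycb: "\<bar>y c\<bar> \<le> (1 - \<beta>) * P * Mx" using pos by simp
  have yj: "y j = \<beta> ^ P * y c - (1 - \<beta>) * (\<Sum>t<P. \<beta> ^ t * xx ((s ^^ Suc t) j))"
    using iter[OF j, of P] unfolding c_def .
  have "\<bar>\<Sum>t<P. \<beta> ^ t * xx ((s ^^ Suc t) j)\<bar> \<le> (\<Sum>t<P. \<bar>\<beta> ^ t * xx ((s ^^ Suc t) j)\<bar>)"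
    by (rule sum_abs)
  also have "\<dots> \<le> (\<Sum>t<P. Mx)"
  proof (rule sum_mono)
    fix t assume "t \<in> {..<P}"
    have "\<beta> ^ t \<le> 1" using b0 b1 by (simp add: power_le_one)
    moreover have "\<bar>xx ((s ^^ Suc t) j)\<bar> \<le> Mx" by (rule Mx_ge[OF st_in[OF j]])
    ultimately have "\<beta> ^ t * \<bar>xx ((s ^^ Suc t) j)\<bar> \<le> 1 * Mx"
      using b0 by (intro mult_mono) (auto simp: Mx_nonneg)
    then show "\<bar>\<beta> ^ t * xx ((s ^^ Suc t) j)\<bar> \<le> Mx"
      using b0 by (simp add: abs_mult)
  qed
  finally have sb2: "\<bar>\<Sum>t<P. \<beta> ^ t * xx ((s ^^ Suc t) j)\<bar> \<le> P * Mx" by simp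
  have bp1: "\<beta> ^ P \<le> 1" using b0 b1 by (simp add: power_le_one)
  have "\<bar>y j\<bar> \<le> \<beta> ^ P * \<bar>y c\<bar> + (1 - \<beta>) * \<bar>\<Sum>t<P. \<beta> ^ t * xx ((s ^^ Suc t) j)\<bar>"
  proof -
    have "\<bar>y j\<bar> \<le> \<bar>\<beta> ^ P * y c\<bar> + \<bar>(1 - \<beta>) * (\<Sum>t<P. \<beta> ^ t * xx ((s ^^ Suc t) j))\<bar>"
      unfolding yj by (rule abs_triangle_ineq4)
    then show ?thesis using b0 b1 by (simp add: abs_mult)
  qed
  also have "\<dots> \<le> 1 * ((1 - \<beta>) * P * Mx) + (1 - \<beta>) * (P * Mx)"
    using b0 b1 bp1 ycb sb2 by (intro add_mono mult_mono) auto
  finally show ?thesis unfolding y_def by (simp add: algebra_simps)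
qed

end

lemma arch:
  assumes "infinite (S :: nat set)" "\<forall>n\<in>S. (real n + 2) * g \<le> R"
  shows "g \<le> 0"
proof (rule ccontr)
  assume "\<not> g \<le> 0"
  then have g: "g > 0" by simp
  obtain n where n: "n \<in> S" "n \<ge> nat \<lceil>R / g\<rceil>"
    using assms(1) unfolding infinite_nat_iff_unbounded_le by blast
  have "R / g \<le> real n" using n(2) by linarith
  then have "R \<le> real n * g" using g by (simp add: field_simps)
  also have "\<dots> < (real n + 2) * g" using g by (simp add: algebra_simps)
  finally show False using assms(2) n(1) by fastforce
qed

lemma le_mult_r: "(0::real) \<le> z \<Longrightarrow> 1 \<le> r \<Longrightarrow> z \<le> z * r"
  using mult_left_mono[of 1 r z] by simp

lemma edge_alg:
  fixes r a b K c ej el xj xl :: real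
  assumes r: "r \<ge> 1" and K: "K \<ge> 0" and a: "\<bar>a\<bar> \<le> K / r" and b: "\<bar>b\<bar> \<le> K / r"
    and h: "c \<le> (ej * r + xj + a) - (1 - 1 / r) * (el * r + xl + b)"
  shows "r * (el - ej) \<le> el + \<bar>xj\<bar> + 2 * \<bar>xl\<bar> + 3 * K - c"
    and "el = ej \<Longrightarrow> r * (c - (ej + xj - xl)) \<le> \<bar>xl\<bar> + 3 * K"
proof -
  have rp: "r > 0" using r by simp
  have e: "(ej * r + xj + a) - (1 - 1 / r) * (el * r + xl + b)
      = (r * ej - r * el) + el + xj - xl + xl / r + a - b + b / r"
    using rp by (simp add: field_simps)
  have Kr: "K / r \<le> K" using r K by (simp add: divide_le_eq le_mult_r)
  have xr: "\<bar>xl / r\<bar> \<le> \<bar>xl\<bar>" using r by (simp add: abs_div divide_le_eq le_mult_r)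
  have br0: "\<bar>b / r\<bar> \<le> \<bar>b\<bar>" using r by (simp add: abs_div divide_le_eq le_mult_r)
  have h2: "c \<le> (r * ej - r * el) + el + xj - xl + xl / r + a - b + b / r" using h unfolding e .
  have ab: "xj \<le> \<bar>xj\<bar>" "- xl \<le> \<bar>xl\<bar>" "xl / r \<le> \<bar>xl / r\<bar>" "a \<le> \<bar>a\<bar>" "- b \<le> \<bar>b\<bar>" "b / r \<le> \<bar>b / r\<bar>"
    by (rule abs_ge_self)+ (simp_all only: abs_ge_minus_self)
  have d: "r * (el - ej) = r * el - r * ej" by (simp add: right_diff_distrib)
  show "r * (el - ej) \<le> el + \<bar>xj\<bar> + 2 * \<bar>xl\<bar> + 3 * K - c"
    unfolding d using h2 ab a b Kr xr br0 by linarith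
  assume eq: "el = ej"
  have "c - (ej + xj - xl) \<le> xl / r + a - b + b / r" using h2 eq by simp
  then have "r * (c - (ej + xj - xl)) \<le> r * (xl / r + a - b + b / r)"
    using rp by (simp add: mult_left_mono)
  also have "\<dots> = xl + r * a - r * b + b" using rp by (simp add: field_simps)
  also have "\<dots> \<le> \<bar>xl\<bar> + 3 * K"
  proof -
    have "\<bar>r * a\<bar> \<le> K" "\<bar>r * b\<bar> \<le> K" using a b rp by (simp_all add: abs_mult le_divide_eq mult.commute)
    moreover have "r * a \<le> \<bar>r * a\<bar>" "- (r * b) \<le> \<bar>r * b\<bar>" "xl \<le> \<bar>xl\<bar>" "b \<le> \<bar>b\<bar>" by auto
    ultimately show ?thesis using b Kr by linarith
  qed
  finally show "r * (c - (ej + xj - xl)) \<le> \<bar>xl\<bar> + 3 * K" .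
qed

lemma edge:
  assumes S: "infinite (S :: nat set)" and K: "K \<ge> 0"
    and vj: "\<forall>n\<in>S. \<bar>vv n j - eta j * (real n + 2) - x j\<bar> \<le> K / (real n + 2)"
    and vl: "\<forall>n\<in>S. \<bar>vv n l - eta l * (real n + 2) - x l\<bar> \<le> K / (real n + 2)"
    and h: "\<forall>n\<in>S. vv n j \<ge> c + (1 - 1 / (real n + 2)) * vv n l"
  shows "eta l \<le> eta j \<and> (eta l = eta j \<longrightarrow> c \<le> eta j + x j - x l)"
proof -
  have A: "(real n + 2) * (eta l - eta j) \<le> eta l + \<bar>x j\<bar> + 2 * \<bar>x l\<bar> + 3 * K - c"
    and B: "eta l = eta j \<Longrightarrow> (real n + 2) * (c - (eta j + x j - x l)) \<le> \<bar>x l\<bar> + 3 * K"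
    if n: "n \<in> S" for n
  proof -
    define a where "a = vv n j - eta j * (real n + 2) - x j"
    define b where "b = vv n l - eta l * (real n + 2) - x l"
    have h': "c \<le> (eta j * (real n + 2) + x j + a) - (1 - 1 / (real n + 2)) * (eta l * (real n + 2) + x l + b)"
      using h n unfolding a_def b_def by auto
    have "\<bar>a\<bar> \<le> K / (real n + 2)" "\<bar>b\<bar> \<le> K / (real n + 2)" using vj vl n unfolding a_def b_def by auto
    note E = edge_alg[of "real n + 2" K a b c "eta j" "x j" "eta l" "x l", OF _ K this h']
    show "(real n + 2) * (eta l - eta j) \<le> eta l + \<bar>x j\<bar> + 2 * \<bar>x l\<bar> + 3 * K - c"
      using E(1) by simp
    show "eta l = eta j \<Longrightarrow> (real n + 2) * (c - (eta j + x j - x l)) \<le> \<bar>x l\<bar> + 3 * K"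
      using E(2) by simp
  qed
  have "eta l - eta j \<le> 0" using arch[OF S] A by blast
  moreover have "c - (eta j + x j - x l) \<le> 0" if "eta l = eta j"
    using arch[OF S] B that by blast
  ultimately show ?thesis by simp
qed

lemma ev_edge:
  fixes ea eb c E :: real
  assumes "ea \<le> eb" "ea = eb \<longrightarrow> c \<le> E"
  shows "\<forall>\<^sub>F t in at_top. t * ea + c \<le> t * eb + E"
proof (cases "ea = eb")
  case True then show ?thesis using assms by simp
next
  case False
  then have d: "eb - ea > 0" using assms by simp
  have "\<forall>\<^sub>F t in at_top. t \<ge> (c - E) / (eb - ea)" by (rule eventually_ge_at_top)
  then show ?thesis
  proof (rule eventually_mono)
    fix t assume "t \<ge> (c - E) / (eb - ea)"
    then have "c - E \<le> t * (eb - ea)" using d by (simp add: divide_le_eq)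
    then show "t * ea + c \<le> t * eb + E" by (simp add: algebra_simps)
  qed
qed

lemma finite_min_str: "finite (min_strategies M N A)"
proof -
  have "min_strategies M N A \<subseteq> {..<N} \<rightarrow>\<^sub>E {..<M}" unfolding min_strategies_def by auto
  moreover have "finite ({..<N} \<rightarrow>\<^sub>E {..<M})" by (intro finite_PiE) auto
  ultimately show ?thesis by (rule finite_subset)
qed

lemma finite_max_str: "finite (max_strategies M N B)"
proof -
  have "max_strategies M N B \<subseteq> {..<M} \<rightarrow>\<^sub>E {..<N}" unfolding max_strategies_def by auto
  moreover have "finite ({..<M} \<rightarrow>\<^sub>E {..<N})" by (intro finite_PiE) auto
  ultimately show ?thesis by (rule finite_subset)
qed

lemma core:
  assumes hA: "HA M N A" and hB: "HB M N B"
  shows "\<exists>\<eta> x \<tau> \<sigma> T. \<tau> \<in> min_strategies M N A \<and> \<sigma> \<in> max_strategies M N B \<and>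
    (\<forall>t\<ge>T. \<forall>j<N. minmax_map M N (restrict_min A \<tau>) B (\<lambda>l. x l + t * \<eta> l) j \<le> x j + (t + 1) * \<eta> j) \<and>
    (\<forall>t\<ge>T. \<forall>j<N. x j + (t + 1) * \<eta> j \<le> minmax_map M N A (restrict_max B \<sigma>) (\<lambda>l. x l + t * \<eta> l) j)"
proof -
  define f where "f = minmax_map M N A B"
  define \<beta> where "\<beta> n = 1 - 1 / (real n + 2)" for n :: nat
  have \<beta>0: "0 \<le> \<beta> n" "\<beta> n < 1" for n unfolding \<beta>_def by (auto simp: field_simps)
  have omb: "1 - \<beta> n = 1 / (real n + 2)" for n unfolding \<beta>_def by simp
  define vv where "vv n = (SOME v. \<forall>j<N. f (\<lambda>l. \<beta> n * v l) j = v j)" for n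
  have vv: "\<forall>j<N. f (\<lambda>l. \<beta> n * vv n l) j = vv n j" for n
    unfolding vv_def f_def by (rule someI_ex[OF fixpoint[OF hA hB \<beta>0]])
  define u where "u n = (\<lambda>l. \<beta> n * vv n l)" for n
  define \<tau>n where "\<tau>n n = (\<lambda>j. if j < N then (SOME k. k < M \<and> A k j \<noteq> -\<infinity> \<and>
      f (u n) j = - real_of_ereal (A k j) + mx N B k (u n)) else undefined)" for n
  define \<sigma>n where "\<sigma>n n = (\<lambda>k. if k < M then (SOME l. l < N \<and> B k l \<noteq> -\<infinity> \<and>
      mx N B k (u n) = real_of_ereal (B k l) + u n l) else undefined)" for n
  have \<tau>n: "\<tau>n n j < M \<and> A (\<tau>n n j) j \<noteq> -\<infinity> \<and>
      f (u n) j = - real_of_ereal (A (\<tau>n n j) j) + mx N B (\<tau>n n j) (u n)" if j: "j < N" for n j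
  proof -
    have "\<exists>k<M. A k j \<noteq> -\<infinity>" using hA j unfolding HA_def by blast
    from someI_ex[OF mm_att[where M=M and A=A and j=j and N=N and B=B and u="u n", OF this]] show ?thesis
      using j unfolding \<tau>n_def f_def by simp
  qed
  have \<sigma>n: "\<sigma>n n k < N \<and> B k (\<sigma>n n k) \<noteq> -\<infinity> \<and>
      mx N B k (u n) = real_of_ereal (B k (\<sigma>n n k)) + u n (\<sigma>n n k)" if k: "k < M" for n k
  proof -
    have "\<exists>l<N. B k l \<noteq> -\<infinity>" using hB k unfolding HB_def by blast
    from someI_ex[OF mx_att[where N=N and B=B and k=k and u="u n", OF this]] show ?thesis
      using k unfolding \<sigma>n_def by simp
  qed
  have \<tau>n_in: "\<tau>n n \<in> min_strategies M N A" for n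
  proof -
    have "\<tau>n n \<in> extensional {..<N}" unfolding \<tau>n_def extensional_def by auto
    then show ?thesis unfolding min_strategies_def using \<tau>n by (auto simp: PiE_iff)
  qed
  have \<sigma>n_in: "\<sigma>n n \<in> max_strategies M N B" for n
  proof -
    have "\<sigma>n n \<in> extensional {..<M}" unfolding \<sigma>n_def extensional_def by auto
    then show ?thesis unfolding max_strategies_def using \<sigma>n by (auto simp: PiE_iff)
  qed
  have "finite ((\<lambda>n. (\<tau>n n, \<sigma>n n)) ` UNIV)"
    by (rule finite_subset[of _ "min_strategies M N A \<times> max_strategies M N B"])
      (use \<tau>n_in \<sigma>n_in finite_min_str finite_max_str in auto)
  from pigeonhole_infinite[OF infinite_UNIV_nat this]
  obtain n0 where S: "infinite {n. (\<tau>n n, \<sigma>n n) = (\<tau>n n0, \<sigma>n n0)}" by auto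
  define S where "S = {n. (\<tau>n n, \<sigma>n n) = (\<tau>n n0, \<sigma>n n0)}"
  define \<tau> where "\<tau> = \<tau>n n0"
  define \<sigma> where "\<sigma> = \<sigma>n n0"
  have Sinf: "infinite S" using S unfolding S_def .
  have S\<tau>: "\<tau>n n = \<tau>" and S\<sigma>: "\<sigma>n n = \<sigma>" if "n \<in> S" for n
    using that unfolding S_def \<tau>_def \<sigma>_def by auto
  have \<tau>: "\<tau> j < M" "A (\<tau> j) j \<noteq> -\<infinity>" if "j < N" for j using \<tau>n[OF that, of n0] unfolding \<tau>_def by auto
  have \<sigma>: "\<sigma> k < N" "B k (\<sigma> k) \<noteq> -\<infinity>" if "k < M" for k using \<sigma>n[OF that, of n0] unfolding \<sigma>_def by auto
  define s where "s j = \<sigma> (\<tau> j)" for j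
  define w where "w j = - real_of_ereal (A (\<tau> j) j) + real_of_ereal (B (\<tau> j) (s j))" for j
  interpret G: fg N s w
    by unfold_locales (auto simp: s_def \<sigma> \<tau>)
  have veq: "\<forall>j<N. vv n j = w j + \<beta> n * vv n (s j)" if n: "n \<in> S" for n
  proof (intro allI impI)
    fix j assume j: "j < N"
    have "vv n j = f (u n) j" using vv j unfolding u_def by simp
    also have "\<dots> = - real_of_ereal (A (\<tau> j) j) + mx N B (\<tau> j) (u n)"
      using \<tau>n[OF j, of n] S\<tau>[OF n] by simp
    also have "\<dots> = w j + \<beta> n * vv n (s j)"
      using \<sigma>n[OF \<tau>(1)[OF j], of n] S\<sigma>[OF n] unfolding w_def s_def u_def by simp
    finally show "vv n j = w j + \<beta> n * vv n (s j)" .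
  qed
  define K where "K = 2 * G.P * G.Mx"
  have K0: "K \<ge> 0" unfolding K_def using G.Mx_nonneg by simp
  have bnd: "\<bar>vv n j - G.eta j * (real n + 2) - G.xx j\<bar> \<le> K / (real n + 2)"
    if n: "n \<in> S" and j: "j < N" for n j
    using G.ybound[OF \<beta>0 veq[OF n] j] unfolding omb K_def by simp
  have bndm: "\<bar>- vv n j - (- G.eta j) * (real n + 2) - (- G.xx j)\<bar> \<le> K / (real n + 2)"
    if n: "n \<in> S" and j: "j < N" for n j
    using bnd[OF n j] by linarith
  define x where "x = G.xx"
  define \<eta> where "\<eta> = G.eta"
  have ea: "\<eta> l \<le> \<eta> j \<and> (\<eta> l = \<eta> j \<longrightarrow>
      - real_of_ereal (A (\<tau> j) j) + real_of_ereal (B (\<tau> j) l) \<le> \<eta> j + x j - x l)"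
    if j: "j < N" and l: "l < N" and Bl: "B (\<tau> j) l \<noteq> -\<infinity>" for j l
    unfolding x_def \<eta>_def
  proof (rule edge[OF Sinf K0])
    show "\<forall>n\<in>S. \<bar>vv n j - G.eta j * (real n + 2) - G.xx j\<bar> \<le> K / (real n + 2)" using bnd j by blast
    show "\<forall>n\<in>S. \<bar>vv n l - G.eta l * (real n + 2) - G.xx l\<bar> \<le> K / (real n + 2)" using bnd l by blast
    show "\<forall>n\<in>S. - real_of_ereal (A (\<tau> j) j) + real_of_ereal (B (\<tau> j) l) + (1 - 1 / (real n + 2)) * vv n l \<le> vv n j"
    proof
      fix n assume n: "n \<in> S"
      have "vv n j = f (u n) j" using vv j unfolding u_def by simp
      also have "\<dots> = - real_of_ereal (A (\<tau> j) j) + mx N B (\<tau> j) (u n)"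
        using \<tau>n[OF j, of n] S\<tau>[OF n] by simp
      finally have "vv n j = - real_of_ereal (A (\<tau> j) j) + mx N B (\<tau> j) (u n)" .
      moreover have "real_of_ereal (B (\<tau> j) l) + u n l \<le> mx N B (\<tau> j) (u n)"
        by (rule mx_ge[where N=N and B=B and k="\<tau> j" and l=l, OF l Bl])
      ultimately show "- real_of_ereal (A (\<tau> j) j) + real_of_ereal (B (\<tau> j) l) + (1 - 1 / (real n + 2)) * vv n l \<le> vv n j"
        unfolding u_def \<beta>_def by simp
    qed
  qed
  have eb: "\<eta> j \<le> \<eta> (\<sigma> k) \<and> (\<eta> j = \<eta> (\<sigma> k) \<longrightarrow>
      x j + \<eta> j \<le> - real_of_ereal (A k j) + real_of_ereal (B k (\<sigma> k)) + x (\<sigma> k))"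
    if j: "j < N" and k: "k < M" and Ak: "A k j \<noteq> -\<infinity>" for j k
  proof -
    have l: "\<sigma> k < N" using \<sigma>(1)[OF k] .
    have "- \<eta> (\<sigma> k) \<le> - \<eta> j \<and> (- \<eta> (\<sigma> k) = - \<eta> j \<longrightarrow>
      - (- real_of_ereal (A k j) + real_of_ereal (B k (\<sigma> k))) \<le> - \<eta> j + - x j - - x (\<sigma> k))"
      unfolding x_def \<eta>_def
    proof (rule edge[OF Sinf K0, where vv="\<lambda>n i. - vv n i" and eta="\<lambda>i. - G.eta i" and x="\<lambda>i. - G.xx i"])
      show "\<forall>n\<in>S. \<bar>- vv n j - (- G.eta j) * (real n + 2) - (- G.xx j)\<bar> \<le> K / (real n + 2)" using bndm j by blast
      show "\<forall>n\<in>S. \<bar>- vv n (\<sigma> k) - (- G.eta (\<sigma> k)) * (real n + 2) - (- G.xx (\<sigma> k))\<bar> \<le> K / (real n + 2)"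
        using bndm l by blast
      show "\<forall>n\<in>S. - (- real_of_ereal (A k j) + real_of_ereal (B k (\<sigma> k))) + (1 - 1 / (real n + 2)) * - vv n (\<sigma> k) \<le> - vv n j"
      proof
        fix n assume n: "n \<in> S"
        have "vv n j = f (u n) j" using vv j unfolding u_def by simp
        also have "\<dots> \<le> - real_of_ereal (A k j) + mx N B k (u n)"
          unfolding f_def by (rule mm_le[where M=M and A=A and k=k and j=j, OF k Ak])
        also have "\<dots> = - real_of_ereal (A k j) + real_of_ereal (B k (\<sigma> k)) + u n (\<sigma> k)"
          using \<sigma>n[OF k, of n] S\<sigma>[OF n] by simp
        finally show "- (- real_of_ereal (A k j) + real_of_ereal (B k (\<sigma> k))) + (1 - 1 / (real n + 2)) * - vv n (\<sigma> k) \<le> - vv n j"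
          unfolding u_def \<beta>_def by simp
      qed
    qed
    then show ?thesis by auto
  qed
  have evA: "\<forall>\<^sub>F t in at_top. \<forall>j\<in>{..<N}. \<forall>l\<in>{l. l < N \<and> B (\<tau> j) l \<noteq> -\<infinity>}.
      t * \<eta> l + (- real_of_ereal (A (\<tau> j) j) + real_of_ereal (B (\<tau> j) l) + x l) \<le> t * \<eta> j + (x j + \<eta> j)"
  proof (intro eventually_ball_finite ballI)
    fix j l assume j: "j \<in> {..<N}" and l: "l \<in> {l. l < N \<and> B (\<tau> j) l \<noteq> -\<infinity>}"
    show "\<forall>\<^sub>F t in at_top. t * \<eta> l + (- real_of_ereal (A (\<tau> j) j) + real_of_ereal (B (\<tau> j) l) + x l) \<le> t * \<eta> j + (x j + \<eta> j)"
      using ea[of j l] j l by (intro ev_edge) auto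
  qed auto
  have evB: "\<forall>\<^sub>F t in at_top. \<forall>j\<in>{..<N}. \<forall>k\<in>{k. k < M \<and> A k j \<noteq> -\<infinity>}.
      t * \<eta> j + (x j + \<eta> j) \<le> t * \<eta> (\<sigma> k) + (- real_of_ereal (A k j) + real_of_ereal (B k (\<sigma> k)) + x (\<sigma> k))"
  proof (intro eventually_ball_finite ballI)
    fix j k assume j: "j \<in> {..<N}" and k: "k \<in> {k. k < M \<and> A k j \<noteq> -\<infinity>}"
    show "\<forall>\<^sub>F t in at_top. t * \<eta> j + (x j + \<eta> j) \<le> t * \<eta> (\<sigma> k) + (- real_of_ereal (A k j) + real_of_ereal (B k (\<sigma> k)) + x (\<sigma> k))"
      using eb[of j k] j k by (intro ev_edge) auto
  qed auto
  obtain T where T: "\<And>t. t \<ge> T \<Longrightarrow> (\<forall>j\<in>{..<N}. \<forall>l\<in>{l. l < N \<and> B (\<tau> j) l \<noteq> -\<infinity>}.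
      t * \<eta> l + (- real_of_ereal (A (\<tau> j) j) + real_of_ereal (B (\<tau> j) l) + x l) \<le> t * \<eta> j + (x j + \<eta> j)) \<and>
      (\<forall>j\<in>{..<N}. \<forall>k\<in>{k. k < M \<and> A k j \<noteq> -\<infinity>}.
      t * \<eta> j + (x j + \<eta> j) \<le> t * \<eta> (\<sigma> k) + (- real_of_ereal (A k j) + real_of_ereal (B k (\<sigma> k)) + x (\<sigma> k)))"
    using eventually_conj[OF evA evB] unfolding eventually_at_top_linorder by blast
  have \<tau>_in: "\<tau> \<in> min_strategies M N A" unfolding \<tau>_def by (rule \<tau>n_in)
  have \<sigma>_in: "\<sigma> \<in> max_strategies M N B" unfolding \<sigma>_def by (rule \<sigma>n_in)
  have P1: "\<forall>t\<ge>T. \<forall>j<N. minmax_map M N (restrict_min A \<tau>) B (\<lambda>l. x l + t * \<eta> l) j \<le> x j + (t + 1) * \<eta> j"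
  proof (intro allI impI)
    fix t j assume t: "T \<le> t" and j: "j < N"
    have "\<exists>l<N. B (\<tau> j) l \<noteq> -\<infinity>" using hB \<tau>(1)[OF j] unfolding HB_def by blast
    from mx_att[where N=N and B=B and k="\<tau> j" and u="\<lambda>l. x l + t * \<eta> l", OF this] obtain l where
      l: "l < N" "B (\<tau> j) l \<noteq> -\<infinity>" "mx N B (\<tau> j) (\<lambda>l. x l + t * \<eta> l) = real_of_ereal (B (\<tau> j) l) + (x l + t * \<eta> l)"
      by blast
    have "minmax_map M N (restrict_min A \<tau>) B (\<lambda>l. x l + t * \<eta> l) j
        = - real_of_ereal (A (\<tau> j) j) + mx N B (\<tau> j) (\<lambda>l. x l + t * \<eta> l)"
      by (rule mm_rmin[OF \<tau>_in j])
    also have "\<dots> = t * \<eta> l + (- real_of_ereal (A (\<tau> j) j) + real_of_ereal (B (\<tau> j) l) + x l)"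
      using l(3) by simp
    also have "\<dots> \<le> t * \<eta> j + (x j + \<eta> j)" using T[OF t] j l(1,2) by blast
    finally show "minmax_map M N (restrict_min A \<tau>) B (\<lambda>l. x l + t * \<eta> l) j \<le> x j + (t + 1) * \<eta> j"
      by (simp add: algebra_simps)
  qed
  have P2: "\<forall>t\<ge>T. \<forall>j<N. x j + (t + 1) * \<eta> j \<le> minmax_map M N A (restrict_max B \<sigma>) (\<lambda>l. x l + t * \<eta> l) j"
  proof (intro allI impI)
    fix t j assume t: "T \<le> t" and j: "j < N"
    have "\<exists>k<M. A k j \<noteq> -\<infinity>" using hA j unfolding HA_def by blast
    from mm_att[where M=M and A=A and j=j and N=N and B="restrict_max B \<sigma>" and u="\<lambda>l. x l + t * \<eta> l", OF this] obtain k where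
      k: "k < M" "A k j \<noteq> -\<infinity>" "minmax_map M N A (restrict_max B \<sigma>) (\<lambda>l. x l + t * \<eta> l) j
          = - real_of_ereal (A k j) + mx N (restrict_max B \<sigma>) k (\<lambda>l. x l + t * \<eta> l)"
      by blast
    have "x j + (t + 1) * \<eta> j = t * \<eta> j + (x j + \<eta> j)" by (simp add: algebra_simps)
    also have "\<dots> \<le> t * \<eta> (\<sigma> k) + (- real_of_ereal (A k j) + real_of_ereal (B k (\<sigma> k)) + x (\<sigma> k))"
      using T[OF t] j k(1,2) by blast
    also have "\<dots> = minmax_map M N A (restrict_max B \<sigma>) (\<lambda>l. x l + t * \<eta> l) j"
      unfolding k(3) mx_rmax[OF \<sigma>_in k(1)] by simp
    finally show "x j + (t + 1) * \<eta> j \<le> minmax_map M N A (restrict_max B \<sigma>) (\<lambda>l. x l + t * \<eta> l) j" .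
  qed
  show ?thesis using \<tau>_in \<sigma>_in P1 P2 by blast
qed

definition cyc :: "nat \<Rightarrow> nat \<Rightarrow> (nat \<Rightarrow> nat \<Rightarrow> ereal) \<Rightarrow> (nat \<Rightarrow> nat \<Rightarrow> ereal) \<Rightarrow> (nat \<Rightarrow> real) \<Rightarrow> real \<Rightarrow> bool" where
  "cyc M N A B \<eta> K \<longleftrightarrow> (\<forall>k j. j < N \<longrightarrow> \<bar>(minmax_map M N A B ^^ k) (\<lambda>_. 0) j - real k * \<eta> j\<bar> \<le> K)"

lemma kohl_up:
  assumes hA: "HA M N A" and hB: "HB M N B"
    and h: "\<forall>t\<ge>T. \<forall>j<N. minmax_map M N A B (\<lambda>l. x l + t * \<eta> l) j \<le> x j + (t + 1) * \<eta> j"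
  shows "\<exists>K. \<forall>k j. j < N \<longrightarrow> (minmax_map M N A B ^^ k) (\<lambda>_. 0) j \<le> real k * \<eta> j + K"
proof -
  define F where "F = minmax_map M N A B"
  define z where "z l = x l + T * \<eta> l" for l
  have it: "\<forall>j<N. (F ^^ k) z j \<le> x j + (T + real k) * \<eta> j" for k
  proof (induction k)
    case 0 then show ?case by (simp add: z_def)
  next
    case (Suc k)
    show ?case
    proof (intro allI impI)
      fix j assume j: "j < N"
      have "(F ^^ Suc k) z j = F ((F ^^ k) z) j" by simp
      also have "\<dots> \<le> F (\<lambda>l. x l + (T + real k) * \<eta> l) j"
        unfolding F_def by (rule mm_mono[OF hA hB _ j]) (use Suc in \<open>simp add: F_def\<close>)
      also have "\<dots> \<le> x j + (T + real k + 1) * \<eta> j" using h j unfolding F_def by simp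
      finally show "(F ^^ Suc k) z j \<le> x j + (T + real (Suc k)) * \<eta> j" by (simp add: algebra_simps)
    qed
  qed
  define C where "C = (\<Sum>l<N. \<bar>z l\<bar>)"
  have zc: "\<forall>l<N. (\<lambda>_. 0::real) l \<le> z l + C"
  proof (intro allI impI)
    fix l assume "l < N"
    then have "\<bar>z l\<bar> \<le> C" unfolding C_def by (intro member_le_sum) auto
    then show "(\<lambda>_. 0::real) l \<le> z l + C" by linarith
  qed
  define K where "K = (\<Sum>j<N. \<bar>x j + T * \<eta> j\<bar>) + C"
  have "(F ^^ k) (\<lambda>_. 0) j \<le> real k * \<eta> j + K" if j: "j < N" for k j
  proof -
    have "(F ^^ k) (\<lambda>_. 0) j \<le> (F ^^ k) z j + C"
      using iter_shift[OF hA hB zc, of k] j unfolding F_def by blast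
    also have "\<dots> \<le> x j + (T + real k) * \<eta> j + C" using it j by simp
    also have "\<dots> = real k * \<eta> j + (x j + T * \<eta> j) + C" by (simp add: algebra_simps)
    also have "x j + T * \<eta> j \<le> (\<Sum>j<N. \<bar>x j + T * \<eta> j\<bar>)"
      proof -
      have "\<bar>x j + T * \<eta> j\<bar> \<le> (\<Sum>j<N. \<bar>x j + T * \<eta> j\<bar>)"
        by (rule member_le_sum[where f="\<lambda>j. \<bar>x j + T * \<eta> j\<bar>"]) (use j in auto)
      then show ?thesis by linarith
    qed
    finally show ?thesis unfolding K_def by simp
  qed
  then show ?thesis unfolding F_def by blast
qed

lemma kohl_down:
  assumes hA: "HA M N A" and hB: "HB M N B"
    and h: "\<forall>t\<ge>T. \<forall>j<N. x j + (t + 1) * \<eta> j \<le> minmax_map M N A B (\<lambda>l. x l + t * \<eta> l) j"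
  shows "\<exists>K. \<forall>k j. j < N \<longrightarrow> real k * \<eta> j - K \<le> (minmax_map M N A B ^^ k) (\<lambda>_. 0) j"
proof -
  define F where "F = minmax_map M N A B"
  define z where "z l = x l + T * \<eta> l" for l
  have it: "\<forall>j<N. x j + (T + real k) * \<eta> j \<le> (F ^^ k) z j" for k
  proof (induction k)
    case 0 then show ?case by (simp add: z_def)
  next
    case (Suc k)
    show ?case
    proof (intro allI impI)
      fix j assume j: "j < N"
      have "x j + (T + real (Suc k)) * \<eta> j = x j + (T + real k + 1) * \<eta> j" by (simp add: add.assoc)
      also have "\<dots> \<le> F (\<lambda>l. x l + (T + real k) * \<eta> l) j" using h j unfolding F_def by simp
      also have "\<dots> \<le> F ((F ^^ k) z) j"
        unfolding F_def by (rule mm_mono[OF hA hB _ j]) (use Suc in \<open>simp add: F_def\<close>)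
      also have "\<dots> = (F ^^ Suc k) z j" by simp
      finally show "x j + (T + real (Suc k)) * \<eta> j \<le> (F ^^ Suc k) z j" .
    qed
  qed
  define C where "C = (\<Sum>l<N. \<bar>z l\<bar>)"
  have zc: "\<forall>l<N. z l \<le> (\<lambda>_. 0::real) l + C"
  proof (intro allI impI)
    fix l assume "l < N"
    then have "\<bar>z l\<bar> \<le> C" unfolding C_def by (intro member_le_sum) auto
    then show "z l \<le> (\<lambda>_. 0::real) l + C" by linarith
  qed
  define K where "K = (\<Sum>j<N. \<bar>x j + T * \<eta> j\<bar>) + C"
  have "real k * \<eta> j - K \<le> (F ^^ k) (\<lambda>_. 0) j" if j: "j < N" for k j
  proof -
    have "- (x j + T * \<eta> j) \<le> (\<Sum>j<N. \<bar>x j + T * \<eta> j\<bar>)"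
    proof -
      have "\<bar>x j + T * \<eta> j\<bar> \<le> (\<Sum>j<N. \<bar>x j + T * \<eta> j\<bar>)"
        by (rule member_le_sum[where f="\<lambda>j. \<bar>x j + T * \<eta> j\<bar>"]) (use j in auto)
      then show ?thesis by linarith
    qed
    then have "real k * \<eta> j - K \<le> x j + (T + real k) * \<eta> j - C"
      unfolding K_def by (simp add: algebra_simps)
    also have "\<dots> \<le> (F ^^ k) z j - C" using it j by simp
    also have "\<dots> \<le> (F ^^ k) (\<lambda>_. 0) j"
      using iter_shift[OF hA hB zc, of k] j unfolding F_def by fastforce
    finally show ?thesis .
  qed
  then show ?thesis unfolding F_def by blast
qed

lemma cyc_exists:
  assumes hA: "HA M N A" and hB: "HB M N B"
  shows "\<exists>\<eta> K \<tau> \<sigma>. \<tau> \<in> min_strategies M N A \<and> \<sigma> \<in> max_strategies M N B \<and>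
    cyc M N A B \<eta> K \<and> cyc M N (restrict_min A \<tau>) B \<eta> K \<and> cyc M N A (restrict_max B \<sigma>) \<eta> K"
proof -
  obtain \<eta> x \<tau> \<sigma> T where \<tau>: "\<tau> \<in> min_strategies M N A" and \<sigma>: "\<sigma> \<in> max_strategies M N B"
    and up: "\<forall>t\<ge>T. \<forall>j<N. minmax_map M N (restrict_min A \<tau>) B (\<lambda>l. x l + t * \<eta> l) j \<le> x j + (t + 1) * \<eta> j"
    and dn: "\<forall>t\<ge>T. \<forall>j<N. x j + (t + 1) * \<eta> j \<le> minmax_map M N A (restrict_max B \<sigma>) (\<lambda>l. x l + t * \<eta> l) j"
    using core[OF hA hB] by blast
  have hA\<tau>: "HA M N (restrict_min A \<tau>)" by (rule HA_rmin[OF \<tau>])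
  have hB\<sigma>: "HB M N (restrict_max B \<sigma>)" by (rule HB_rmax[OF \<sigma>])
  obtain K1 where K1: "\<forall>k j. j < N \<longrightarrow> (minmax_map M N (restrict_min A \<tau>) B ^^ k) (\<lambda>_. 0) j \<le> real k * \<eta> j + K1"
    using kohl_up[OF hA\<tau> hB up] by blast
  obtain K2 where K2: "\<forall>k j. j < N \<longrightarrow> real k * \<eta> j - K2 \<le> (minmax_map M N A (restrict_max B \<sigma>) ^^ k) (\<lambda>_. 0) j"
    using kohl_down[OF hA hB\<sigma> dn] by blast
  have c1: "\<forall>j<N. (minmax_map M N A (restrict_max B \<sigma>) ^^ k) z j \<le> (minmax_map M N A B ^^ k) z j" for k z
    by (rule iter_cmp, rule cmp_rmax[OF \<sigma> _ hA], assumption, rule mm_mono[OF hA hB], assumption+)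
  have c2: "\<forall>j<N. (minmax_map M N A B ^^ k) z j \<le> (minmax_map M N (restrict_min A \<tau>) B ^^ k) z j" for k z
    by (rule iter_cmp, rule cmp_rmin[OF \<tau>], assumption, rule mm_mono[OF hA\<tau> hB], assumption+)
  define K where "K = \<bar>K1\<bar> + \<bar>K2\<bar>"
  have "cyc M N A B \<eta> K" "cyc M N (restrict_min A \<tau>) B \<eta> K" "cyc M N A (restrict_max B \<sigma>) \<eta> K"
    unfolding cyc_def
  proof (safe)
    fix k j assume j: "j < N"
    note a = K1[rule_format, OF j, of k] K2[rule_format, OF j, of k] c1[rule_format, OF j, of k "\<lambda>_. 0"]
      c2[rule_format, OF j, of k "\<lambda>_. 0"]
    show "\<bar>(minmax_map M N A B ^^ k) (\<lambda>_. 0) j - real k * \<eta> j\<bar> \<le> K"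
      "\<bar>(minmax_map M N (restrict_min A \<tau>) B ^^ k) (\<lambda>_. 0) j - real k * \<eta> j\<bar> \<le> K"
      "\<bar>(minmax_map M N A (restrict_max B \<sigma>) ^^ k) (\<lambda>_. 0) j - real k * \<eta> j\<bar> \<le> K"
      using a unfolding K_def abs_le_iff by (smt (verit) abs_ge_self abs_ge_minus_self)+
  qed
  then show ?thesis using \<tau> \<sigma> by blast
qed

lemma cyc_time:
  assumes "cyc M N A B \<eta> K" "j < N"
  shows "cycle_time M N A B j = \<eta> j"
proof -
  define F where "F = minmax_map M N A B"
  have b: "\<bar>(F ^^ k) (\<lambda>_. 0) j - real k * \<eta> j\<bar> \<le> K" for k
    using assms unfolding cyc_def F_def by blast
  have "(\<lambda>k. ((F ^^ k) (\<lambda>_. 0) j - real k * \<eta> j) / real k) \<longlonglongrightarrow> 0"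
  proof (rule tendsto_0_le[where K=1])
    show "(\<lambda>k. K / real k) \<longlonglongrightarrow> 0" by (rule tendsto_divide_0[OF tendsto_const filterlim_at_top_imp_at_infinity[OF filterlim_real_sequentially]])
    show "\<forall>\<^sub>F k in sequentially. norm (((F ^^ k) (\<lambda>_. 0) j - real k * \<eta> j) / real k) \<le> norm (K / real k) * 1"
    proof (rule eventually_sequentiallyI[of 1])
      fix k :: nat assume "1 \<le> k"
      then have kp: "real k > 0" by simp
      have "\<bar>(F ^^ k) (\<lambda>_. 0) j - real k * \<eta> j\<bar> / real k \<le> K / real k"
        using b[of k] kp by (simp add: divide_right_mono)
      also have "\<dots> \<le> \<bar>K / real k\<bar>" by (rule abs_ge_self)
      finally show "norm (((F ^^ k) (\<lambda>_. 0) j - real k * \<eta> j) / real k) \<le> norm (K / real k) * 1"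
        by (simp add: abs_div kp)
    qed
  qed
  then have "(\<lambda>k. ((F ^^ k) (\<lambda>_. 0) j - real k * \<eta> j) / real k + \<eta> j) \<longlonglongrightarrow> 0 + \<eta> j"
    by (intro tendsto_add tendsto_const)
  then have L: "(\<lambda>k. ((F ^^ k) (\<lambda>_. 0) j - real k * \<eta> j) / real k + \<eta> j) \<longlonglongrightarrow> \<eta> j" by simp
  have "\<forall>\<^sub>F k in sequentially. ((F ^^ k) (\<lambda>_. 0) j - real k * \<eta> j) / real k + \<eta> j = (F ^^ k) (\<lambda>_. 0) j / real k"
    by (rule eventually_sequentiallyI[of 1]) (simp add: field_simps)
  from Lim_transform_eventually[OF L this]
  have "(\<lambda>k. (F ^^ k) (\<lambda>_. 0) j / real k) \<longlonglongrightarrow> \<eta> j" .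
  then show ?thesis unfolding cycle_time_def F_def by (rule limI)
qed

lemma arch2:
  assumes "\<forall>k::nat. real k * g \<le> R" shows "g \<le> 0"
proof (rule arch[of UNIV g "R"])
  show "\<forall>n\<in>UNIV. (real n + 2) * g \<le> R" using assms[rule_format, of "n + 2" for n] by (simp add: add.commute)
qed simp

lemma Min_cmp:
  fixes a b :: "nat \<Rightarrow> real"
  assumes "\<forall>i<N. a i \<le> b i" "0 < N"
  shows "Min {a i | i. i < N} \<le> Min {b i | i. i < N}"
proof -
  have fin: "finite {b i | i. i < N}" by (auto simp: finite_image_set)
  have "{b i | i. i < N} \<noteq> {}" using assms(2) by auto
  from Min_in[OF fin this] obtain i0 where i0: "i0 < N" "Min {b i | i. i < N} = b i0" by auto
  have "Min {a i | i. i < N} \<le> a i0" by (rule Min_le) (use i0 in \<open>auto simp: finite_image_set\<close>)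
  also have "\<dots> \<le> b i0" using assms(1) i0 by auto
  finally show ?thesis using i0 by simp
qed

lemma phi_eq:
  assumes "cyc M N A B \<eta> K"
  shows "Phi_val M N A B = Min {\<eta> i | i. i < N}"
proof -
  have "{cycle_time M N A B i | i. i < N} = {\<eta> i | i. i < N}"
    using cyc_time[OF assms] by force
  then show ?thesis unfolding Phi_val_def by simp
qed

lemma cyc_le:
  assumes "cyc M N A B \<eta> K" "cyc M' N A' B' \<eta>' K'"
    and "\<And>k. \<forall>j<N. (minmax_map M N A B ^^ k) (\<lambda>_. 0) j \<le> (minmax_map M' N A' B' ^^ k) (\<lambda>_. 0) j"
  shows "\<forall>i<N. \<eta> i \<le> \<eta>' i"
proof (intro allI impI)
  fix i assume i: "i < N"
  have "real k * (\<eta> i - \<eta>' i) \<le> K + K'" for k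
  proof -
    have "\<bar>(minmax_map M N A B ^^ k) (\<lambda>_. 0) i - real k * \<eta> i\<bar> \<le> K"
      "\<bar>(minmax_map M' N A' B' ^^ k) (\<lambda>_. 0) i - real k * \<eta>' i\<bar> \<le> K'"
      using assms(1,2) i unfolding cyc_def by blast+
    moreover have "(minmax_map M N A B ^^ k) (\<lambda>_. 0) i \<le> (minmax_map M' N A' B' ^^ k) (\<lambda>_. 0) i"
      using assms(3) i by blast
    ultimately show ?thesis by (simp add: right_diff_distrib abs_le_iff)
  qed
  from arch2[of "\<eta> i - \<eta>' i" "K + K'"] this show "\<eta> i \<le> \<eta>' i" by simp
qed

theorem proposition5:
  fixes m n :: nat
    and U V :: "nat \<Rightarrow> nat \<Rightarrow> ereal"
    and b d p q :: "nat \<Rightarrow> ereal"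
    and lam :: real
  assumes U: "\<forall>i<m. \<forall>j<n. U i j \<noteq> \<infinity>"
    and V: "\<forall>i<m. \<forall>j<n. V i j \<noteq> \<infinity>"
    and b: "\<forall>i<m. b i \<noteq> \<infinity>"
    and d: "\<forall>i<m. d i \<noteq> \<infinity>"
    and p: "\<forall>j<n. p j \<noteq> \<infinity>"
    and q: "\<forall>j<n. q j \<noteq> -\<infinity>"
    and colA: "\<forall>j<n+1. \<exists>i<m+n+1. matA m n U b p q i j \<noteq> -\<infinity>"
    and rowB: "\<forall>i<m+n+1. \<exists>j<n+1. matB m n V d lam i j \<noteq> -\<infinity>"
  shows "Min {Phi_val (m+n+1) (n+1) (restrict_min (matA m n U b p q) \<tau>) (matB m n V d lam)
              | \<tau>. \<tau> \<in> min_strategies (m+n+1) (n+1) (matA m n U b p q)}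
           = Phi_val (m+n+1) (n+1) (matA m n U b p q) (matB m n V d lam)
       \<and> Phi_val (m+n+1) (n+1) (matA m n U b p q) (matB m n V d lam)
           = Max {Phi_val (m+n+1) (n+1) (matA m n U b p q) (restrict_max (matB m n V d lam) \<sigma>)
              | \<sigma>. \<sigma> \<in> max_strategies (m+n+1) (n+1) (matB m n V d lam)}"
proof -
  define M where "M = m + n + 1"
  define N where "N = n + 1"
  define A where "A = matA m n U b p q"
  define B where "B = matB m n V d lam"
  have N0: "0 < N" unfolding N_def by simp
  have hA: "HA M N A" using colA unfolding HA_def M_def N_def A_def by blast
  have hB: "HB M N B" using rowB unfolding HB_def M_def N_def B_def by blast
  obtain \<eta> K \<tau>0 \<sigma>0 where \<tau>0: "\<tau>0 \<in> min_strategies M N A" and \<sigma>0: "\<sigma>0 \<in> max_strategies M N B"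
    and c: "cyc M N A B \<eta> K" and c\<tau>0: "cyc M N (restrict_min A \<tau>0) B \<eta> K"
    and c\<sigma>0: "cyc M N A (restrict_max B \<sigma>0) \<eta> K"
    using cyc_exists[OF hA hB] by blast
  define \<Phi> where "\<Phi> = Min {\<eta> i | i. i < N}"
  have PA: "Phi_val M N A B = \<Phi>" unfolding \<Phi>_def by (rule phi_eq[OF c])
  have T: "\<Phi> \<le> Phi_val M N (restrict_min A \<tau>) B" if \<tau>: "\<tau> \<in> min_strategies M N A" for \<tau>
  proof -
    have hA\<tau>: "HA M N (restrict_min A \<tau>)" by (rule HA_rmin[OF \<tau>])
    obtain \<eta>' K' where c': "cyc M N (restrict_min A \<tau>) B \<eta>' K'"
      using cyc_exists[OF hA\<tau> hB] by blast
    have cmp: "\<forall>j<N. (minmax_map M N A B ^^ k) z j \<le> (minmax_map M N (restrict_min A \<tau>) B ^^ k) z j" for k z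
      by (rule iter_cmp, rule cmp_rmin[OF \<tau>], assumption, rule mm_mono[OF hA\<tau> hB], assumption+)
    have "\<forall>i<N. \<eta> i \<le> \<eta>' i" by (rule cyc_le[OF c c' cmp])
    then have "\<Phi> \<le> Min {\<eta>' i | i. i < N}" unfolding \<Phi>_def by (rule Min_cmp[OF _ N0])
    then show ?thesis using phi_eq[OF c'] by simp
  qed
  have S: "Phi_val M N A (restrict_max B \<sigma>) \<le> \<Phi>" if \<sigma>: "\<sigma> \<in> max_strategies M N B" for \<sigma>
  proof -
    have hB\<sigma>: "HB M N (restrict_max B \<sigma>)" by (rule HB_rmax[OF \<sigma>])
    obtain \<eta>' K' where c': "cyc M N A (restrict_max B \<sigma>) \<eta>' K'"
      using cyc_exists[OF hA hB\<sigma>] by blast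
    have cmp: "\<forall>j<N. (minmax_map M N A (restrict_max B \<sigma>) ^^ k) z j \<le> (minmax_map M N A B ^^ k) z j" for k z
      by (rule iter_cmp, rule cmp_rmax[OF \<sigma> _ hA], assumption, rule mm_mono[OF hA hB], assumption+)
    have "\<forall>i<N. \<eta>' i \<le> \<eta> i" by (rule cyc_le[OF c' c cmp])
    then have "Min {\<eta>' i | i. i < N} \<le> \<Phi>" unfolding \<Phi>_def by (rule Min_cmp[OF _ N0])
    then show ?thesis using phi_eq[OF c'] by simp
  qed
  have "Min {Phi_val M N (restrict_min A \<tau>) B | \<tau>. \<tau> \<in> min_strategies M N A} = \<Phi>"
  proof (rule Min_eqI)
    show "finite {Phi_val M N (restrict_min A \<tau>) B | \<tau>. \<tau> \<in> min_strategies M N A}"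
      using finite_min_str[of M N A] by (simp add: finite_image_set)
    show "\<Phi> \<le> y" if "y \<in> {Phi_val M N (restrict_min A \<tau>) B | \<tau>. \<tau> \<in> min_strategies M N A}" for y
      using that T by blast
    show "\<Phi> \<in> {Phi_val M N (restrict_min A \<tau>) B | \<tau>. \<tau> \<in> min_strategies M N A}"
      using \<tau>0 phi_eq[OF c\<tau>0] unfolding \<Phi>_def by (metis (mono_tags, lifting) mem_Collect_eq)
  qed
  moreover have "Max {Phi_val M N A (restrict_max B \<sigma>) | \<sigma>. \<sigma> \<in> max_strategies M N B} = \<Phi>"
  proof (rule Max_eqI)
    show "finite {Phi_val M N A (restrict_max B \<sigma>) | \<sigma>. \<sigma> \<in> max_strategies M N B}"
      using finite_max_str[of M N B] by (simp add: finite_image_set)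
    show "y \<le> \<Phi>" if "y \<in> {Phi_val M N A (restrict_max B \<sigma>) | \<sigma>. \<sigma> \<in> max_strategies M N B}" for y
      using that S by blast
    show "\<Phi> \<in> {Phi_val M N A (restrict_max B \<sigma>) | \<sigma>. \<sigma> \<in> max_strategies M N B}"
      using \<sigma>0 phi_eq[OF c\<sigma>0] unfolding \<Phi>_def by (metis (mono_tags, lifting) mem_Collect_eq)
  qed
  ultimately show ?thesis using PA unfolding M_def N_def A_def B_def by simp
qed

end
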